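(* Let $U=(U_{ij})_{i,j=1}^M$, $U_{ij}\in M_M(\mathbb C)$, and $V=(V_{ab})_{a,b=1}^N$, $V_{ab}\in M_N(\mathbb C)$, be projective models, $Q\in M_{M\times N}(\mathbb T)$, $W=U\otimes_QV$ and $W^\circ=U\,{}_Q\!\otimes V$. Then $$\widetilde{W}=\widetilde{U}_{13}\,Q^\delta\,\widetilde{V}_{24},\qquad \widetilde{W^\circ}=\widetilde{V}_{24}\,Q^\delta\,\widetilde{U}_{13},$$ where $Q^\delta=\mathrm{diag}\left(\frac{Q_{ic}Q_{jd}}{Q_{id}Q_{jc}}\right)_{icjd}$ is the diagonal matrix on $\mathbb C^M\otimes\mathbb C^N\otimes\mathbb C^M\otimes\mathbb C^N$ whose entry at the basis vector indexed by $(i,c,j,d)$ is $\frac{Q_{ic}Q_{jd}}{Q_{id}Q_{jc}}$.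
   Context: A square matrix of operators is magic if its entries are orthogonal projections and rows and columns sum to $1$; for $U=(U_{ij})$ with $U_{ij}\in M_n(\mathbb C)$, $(U'_{kl})_{ij}=(U_{ij})_{kl}$, and $U$ is a projective model if $U,U'$ are magic. $(W_{ia,jb})_{kc,ld}=\frac{Q_{ic}Q_{jd}}{Q_{id}Q_{jc}}(U_{ij})_{kl}(V_{ab})_{cd}$ and $(W^\circ_{ia,jb})_{kc,ld}=\frac{Q_{ka}Q_{lb}}{Q_{kb}Q_{la}}(U_{ij})_{kl}(V_{ab})_{cd}$. For such a matrix $U$, $\widetilde U$ is defined by $(\widetilde U_{ij})_{kl}=(U_{jl})_{ik}$, viewed as the element $\sum_{ijkl}(\widetilde U_{ij})_{kl}\,e_{ij}\otimes e_{kl}$ of $M_n(\mathbb C)\otimes M_n(\mathbb C)$. The matrices $\widetilde W,\widetilde{W^\circ}$ (built with $n=MN$) are viewed in $M_M\otimes M_N\otimes M_M\otimes M_N$ via $e_{ia,jb}\otimes e_{kc,ld}=e_{ij}\otimes e_{ab}\otimes e_{kl}\otimes e_{cd}$; $\widetilde U_{13}$ and $\widetilde V_{24}$ are the leg-numbered elements acting on tensor legs $1,3$ and $2,4$ respectively. *)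

theory Defs
  imports Complex_Main
begin

text \<open>A block matrix X = (X_ij) with i,j < m and X_ij in M_n(C) is encoded as
  a function X i j k l = (X_ij)_kl, indices ranging over {0..<m} resp. {0..<n}.\<close>

type_synonym 'a blockmat = "'a \<Rightarrow> 'a \<Rightarrow> 'a \<Rightarrow> 'a \<Rightarrow> complex"

definition orth_proj :: "nat \<Rightarrow> (nat \<Rightarrow> nat \<Rightarrow> complex) \<Rightarrow> bool" where
  "orth_proj n P \<longleftrightarrow>
     (\<forall>k<n. \<forall>l<n. P k l = cnj (P l k)) \<and>
     (\<forall>k<n. \<forall>l<n. (\<Sum>r<n. P k r * P r l) = P k l)"

definition magic :: "nat \<Rightarrow> nat \<Rightarrow> nat blockmat \<Rightarrow> bool" where
  "magic m n X \<longleftrightarrow>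
     (\<forall>i<m. \<forall>j<m. orth_proj n (X i j)) \<and>
     (\<forall>i<m. \<forall>k<n. \<forall>l<n. (\<Sum>j<m. X i j k l) = (if k = l then 1 else 0)) \<and>
     (\<forall>j<m. \<forall>k<n. \<forall>l<n. (\<Sum>i<m. X i j k l) = (if k = l then 1 else 0))"

definition prime_bm :: "'a blockmat \<Rightarrow> 'a blockmat" where
  "prime_bm X = (\<lambda>k l i j. X i j k l)"

definition projective_model :: "nat \<Rightarrow> nat blockmat \<Rightarrow> bool" where
  "projective_model n U \<longleftrightarrow> magic n n U \<and> magic n n (prime_bm U)"

definition qtensor :: "(nat \<Rightarrow> nat \<Rightarrow> complex) \<Rightarrow> nat blockmat \<Rightarrow> nat blockmat \<Rightarrow> (nat \<times> nat) blockmat" where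
  "qtensor Q U V = (\<lambda>(i,a) (j,b) (k,c) (l,d).
     Q i c * Q j d / (Q i d * Q j c) * U i j k l * V a b c d)"

definition qtensor' :: "(nat \<Rightarrow> nat \<Rightarrow> complex) \<Rightarrow> nat blockmat \<Rightarrow> nat blockmat \<Rightarrow> (nat \<times> nat) blockmat" where
  "qtensor' Q U V = (\<lambda>(i,a) (j,b) (k,c) (l,d).
     Q k a * Q l b / (Q k b * Q l a) * U i j k l * V a b c d)"

text \<open>tilde X: coefficients (tilde X i j k l) = (X_jl)_ik of the element
  \<Sum> (tilde X_ij)_kl e_ij \<otimes> e_kl.\<close>

definition tilde :: "'a blockmat \<Rightarrow> 'a blockmat" where
  "tilde X = (\<lambda>i j k l. X j l i k)"

text \<open>Operators on C^M \<otimes> C^N \<otimes> C^M \<otimes> C^N, as matrices indexed by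
  row (i,a,k,c) and column (j,b,l,d) (the coefficient of
  e_ij \<otimes> e_ab \<otimes> e_kl \<otimes> e_cd).\<close>

type_synonym op4 = "(nat \<times> nat \<times> nat \<times> nat) \<Rightarrow> (nat \<times> nat \<times> nat \<times> nat) \<Rightarrow> complex"

definition idx4 :: "nat \<Rightarrow> nat \<Rightarrow> (nat \<times> nat \<times> nat \<times> nat) set" where
  "idx4 M N = {0..<M} \<times> {0..<N} \<times> {0..<M} \<times> {0..<N}"

definition mult4 :: "nat \<Rightarrow> nat \<Rightarrow> op4 \<Rightarrow> op4 \<Rightarrow> op4" where
  "mult4 M N A B = (\<lambda>r s. \<Sum>t\<in>idx4 M N. A r t * B t s)"

text \<open>Identification e_{ia,jb} \<otimes> e_{kc,ld} = e_ij \<otimes> e_ab \<otimes> e_kl \<otimes> e_cd.\<close>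

definition view4 :: "(nat \<times> nat) blockmat \<Rightarrow> op4" where
  "view4 T = (\<lambda>(i,a,k,c) (j,b,l,d). T (i,a) (j,b) (k,c) (l,d))"

definition leg13 :: "nat blockmat \<Rightarrow> op4" where
  "leg13 T = (\<lambda>(i,a,k,c) (j,b,l,d).
     T i j k l * (if a = b then 1 else 0) * (if c = d then 1 else 0))"

definition leg24 :: "nat blockmat \<Rightarrow> op4" where
  "leg24 T = (\<lambda>(i,a,k,c) (j,b,l,d).
     T a b c d * (if i = j then 1 else 0) * (if k = l then 1 else 0))"

definition Qdelta :: "(nat \<Rightarrow> nat \<Rightarrow> complex) \<Rightarrow> op4" where
  "Qdelta Q = (\<lambda>r s. if r = s then
     (case r of (i,c,j,d) \<Rightarrow> Q i c * Q j d / (Q i d * Q j c)) else 0)"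

end

theory Submission
  imports Defs
begin

lemma sum_single_pt:
  assumes "finite S" "t0 \<in> S" "\<And>t. t \<in> S \<Longrightarrow> t \<noteq> t0 \<Longrightarrow> f t = 0"
  shows "sum f S = f t0"
proof -
  have "sum f S = sum f {t0}"
    by (rule sum.mono_neutral_right) (use assms in auto)
  thus ?thesis by simp
qed

lemma fin_idx4: "finite (idx4 M N)" by (simp add: idx4_def)

lemma mult_Qd:
  assumes "t \<in> idx4 M N"
  shows "mult4 M N A (Qdelta Q) r t = A r t * Qdelta Q t t"
  unfolding mult4_def
  by (rule trans[OF sum_single_pt[OF fin_idx4 assms]]) (auto simp: Qdelta_def)

theorem proposition2p6:
  fixes M N :: nat
    and U V :: "nat blockmat"
    and Q :: "nat \<Rightarrow> nat \<Rightarrow> complex"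
  assumes "projective_model M U"
    and "projective_model N V"
    and "\<forall>i<M. \<forall>a<N. cmod (Q i a) = 1"
  shows "(\<forall>r\<in>idx4 M N. \<forall>s\<in>idx4 M N.
           view4 (tilde (qtensor Q U V)) r s
             = mult4 M N (mult4 M N (leg13 (tilde U)) (Qdelta Q)) (leg24 (tilde V)) r s)
       \<and> (\<forall>r\<in>idx4 M N. \<forall>s\<in>idx4 M N.
           view4 (tilde (qtensor' Q U V)) r s
             = mult4 M N (mult4 M N (leg24 (tilde V)) (Qdelta Q)) (leg13 (tilde U)) r s)"
proof (intro conjI ballI)
  fix r s assume r: "r \<in> idx4 M N" and s: "s \<in> idx4 M N"
  obtain i a k c where rr: "r = (i,a,k,c)" by (cases r) auto
  obtain j b l d where ss: "s = (j,b,l,d)" by (cases s) auto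
  have t0: "(j,a,l,c) \<in> idx4 M N" using r s rr ss by (auto simp: idx4_def)
  have "mult4 M N (mult4 M N (leg13 (tilde U)) (Qdelta Q)) (leg24 (tilde V)) r s
     = (\<Sum>t\<in>idx4 M N. mult4 M N (leg13 (tilde U)) (Qdelta Q) r t * leg24 (tilde V) t s)"
    by (simp add: mult4_def)
  also have "\<dots> = (\<Sum>t\<in>idx4 M N. leg13 (tilde U) r t * Qdelta Q t t * leg24 (tilde V) t s)"
    by (rule sum.cong) (auto simp: mult_Qd)
  also have "\<dots> = leg13 (tilde U) r (j,a,l,c) * Qdelta Q (j,a,l,c) (j,a,l,c) * leg24 (tilde V) (j,a,l,c) s"
    by (rule sum_single_pt[OF fin_idx4 t0]) (auto simp: rr ss leg13_def leg24_def split: if_splits)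
  finally show "view4 (tilde (qtensor Q U V)) r s
             = mult4 M N (mult4 M N (leg13 (tilde U)) (Qdelta Q)) (leg24 (tilde V)) r s"
    by (simp add: rr ss view4_def tilde_def qtensor_def leg13_def leg24_def Qdelta_def)
next
  fix r s assume r: "r \<in> idx4 M N" and s: "s \<in> idx4 M N"
  obtain i a k c where rr: "r = (i,a,k,c)" by (cases r) auto
  obtain j b l d where ss: "s = (j,b,l,d)" by (cases s) auto
  have t0: "(i,b,k,d) \<in> idx4 M N" using r s rr ss by (auto simp: idx4_def)
  have "mult4 M N (mult4 M N (leg24 (tilde V)) (Qdelta Q)) (leg13 (tilde U)) r s
     = (\<Sum>t\<in>idx4 M N. mult4 M N (leg24 (tilde V)) (Qdelta Q) r t * leg13 (tilde U) t s)"
    by (simp add: mult4_def)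
  also have "\<dots> = (\<Sum>t\<in>idx4 M N. leg24 (tilde V) r t * Qdelta Q t t * leg13 (tilde U) t s)"
    by (rule sum.cong) (auto simp: mult_Qd)
  also have "\<dots> = leg24 (tilde V) r (i,b,k,d) * Qdelta Q (i,b,k,d) (i,b,k,d) * leg13 (tilde U) (i,b,k,d) s"
    by (rule sum_single_pt[OF fin_idx4 t0]) (auto simp: rr ss leg13_def leg24_def split: if_splits)
  finally show "view4 (tilde (qtensor' Q U V)) r s
             = mult4 M N (mult4 M N (leg24 (tilde V)) (Qdelta Q)) (leg13 (tilde U)) r s"
    by (simp add: rr ss view4_def tilde_def qtensor'_def leg13_def leg24_def Qdelta_def)
qed

end
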